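(* Let $\alpha \in (0,1)$. Let $f:[0,1]\to\mathbb{R}_{\ge 0}$ be convex with $f(1-\alpha)=0$, and let $f':[0,1]\to\mathbb{R}$ be a subderivative of $f$ (i.e. $f'(p)\in\partial f(p)$ for every $p\in[0,1]$) satisfying $f'(1-\alpha)=0$. Define $$\ell(p,y) := -f(p)-(y-p)f'(p), \qquad p\in[0,1],\ y\in\{0,1\}.$$ Then $\ell$ is a proper score, and $$\ell\text{-ERT} = \mathbb{E}_X\big[f(p(X))\big].$$
   Context: Let $(X,Y)\sim\mathbb{P}_{X,Y}$ on $\mathcal{X}\times\mathcal{Y}$, and let $C_\alpha(\cdot)$ be a prediction set rule mapping each $x\in\mathcal{X}$ to a subset $C_\alpha(x)\subseteq\mathcal{Y}$ (measurable). Let $Z:=\mathbf{1}\{Y\in C_\alpha(X)\}\in\{0,1\}$ and define the conditional coverage $p(x):=\mathbb{P}(Z=1\mid X=x)=\mathbb{P}(Y\in C_\alpha(X)\mid X=x)$. A function $\ell:[0,1]\times\{0,1\}\to\mathbb{R}$ is a proper score if for all $p,q\in[0,1]$, $\mathbb{E}_{y\sim \mathrm{Bernoulli}(q)}[\ell(p,y)]\ge \mathbb{E}_{y\sim\mathrm{Bernoulli}(q)}[\ell(q,y)]$. For a (measurable) predictor $h:\mathcal{X}\to[0,1]$, its risk is $\mathcal{R}_\ell(h):=\mathbb{E}_{X,Z}[\ell(h(X),Z)]$; a constant $c\in[0,1]$ is viewed as the constant predictor. The excess risk of the target coverage is $\ell\text{-ERT}:=\mathcal{R}_\ell(1-\alpha)-\mathcal{R}_\ell(p)$.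 All expectations are assumed to be well-defined. *)

theory Defs
  imports "HOL-Probability.Probability"
begin

definition subderivative_on :: "(real \<Rightarrow> real) \<Rightarrow> (real \<Rightarrow> real) \<Rightarrow> real set \<Rightarrow> bool" where
  "subderivative_on f g S \<longleftrightarrow> (\<forall>p\<in>S. \<forall>q\<in>S. f q \<ge> f p + g p * (q - p))"

text \<open>Proper score l : [0,1] x {0,1} -> R; the label y is encoded as the real 0 or 1.\<close>
definition proper_score :: "(real \<Rightarrow> real \<Rightarrow> real) \<Rightarrow> bool" where
  "proper_score l \<longleftrightarrow> (\<forall>p\<in>{0..1}. \<forall>q\<in>{0..1}.
     measure_pmf.expectation (bernoulli_pmf q) (\<lambda>b. l p (of_bool b))
       \<ge> measure_pmf.expectation (bernoulli_pmf q) (\<lambda>b. l q (of_bool b)))"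

definition risk :: "'w measure \<Rightarrow> ('w \<Rightarrow> 'x) \<Rightarrow> ('w \<Rightarrow> real) \<Rightarrow> (real \<Rightarrow> real \<Rightarrow> real)
    \<Rightarrow> ('x \<Rightarrow> real) \<Rightarrow> real" where
  "risk M X Z l h = (\<integral>\<omega>. l (h (X \<omega>)) (Z \<omega>) \<partial>M)"

end

theory Submission
  imports Defs
begin

lemma transfer_lemma:
  fixes M :: "'w measure" and N :: "'x measure" and X :: "'w \<Rightarrow> 'x"
    and Z :: "'w \<Rightarrow> real" and p :: "'x \<Rightarrow> real" and h :: "'x \<Rightarrow> real"
  assumes P: "prob_space M"
    and X[measurable]: "X \<in> measurable M N" and Zm[measurable]: "Z \<in> borel_measurable M"
    and Zr: "\<And>w. Z w \<in> {0..1}"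
    and pm[measurable]: "p \<in> borel_measurable N" and pr: "\<And>x. p x \<in> {0..1}"
    and pc: "\<And>A. A \<in> sets N \<Longrightarrow>
        (\<integral>\<omega>. indicator A (X \<omega>) * Z \<omega> \<partial>M) = (\<integral>\<omega>. indicator A (X \<omega>) * p (X \<omega>) \<partial>M)"
    and hm[measurable]: "h \<in> borel_measurable N"
  shows "(\<integral>\<omega>. Z \<omega> * h (X \<omega>) \<partial>M) = (\<integral>\<omega>. p (X \<omega>) * h (X \<omega>) \<partial>M)"
proof -
  interpret prob_space M by (rule P)
  have Z0: "\<And>w. 0 \<le> Z w" and Z1: "\<And>w. Z w \<le> 1" using Zr by auto
  have p0: "\<And>x. 0 \<le> p x" and p1: "\<And>x. p x \<le> 1" using pr by auto
  have eq: "distr (density M (\<lambda>w. ennreal (Z w))) N X = density (distr M N X) (\<lambda>x. ennreal (p x))"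
  proof (rule measure_eqI)
    show "sets (distr (density M (\<lambda>w. ennreal (Z w))) N X) = sets (density (distr M N X) (\<lambda>x. ennreal (p x)))"
      by simp
  next
    fix A assume "A \<in> sets (distr (density M (\<lambda>w. ennreal (Z w))) N X)"
    then have A[measurable]: "A \<in> sets N" by simp
    have i1: "integrable M (\<lambda>\<omega>. indicator A (X \<omega>) * Z \<omega>)"
      by (rule integrable_const_bound[where B=1]) (auto simp: indicator_def Z0 Z1 abs_le_iff intro: order_trans[OF _ Z1])
    have i2: "integrable M (\<lambda>\<omega>. indicator A (X \<omega>) * p (X \<omega>))"
      by (rule integrable_const_bound[where B=1]) (auto simp: indicator_def p0 p1 abs_le_iff)
    have "emeasure (distr (density M (\<lambda>w. ennreal (Z w))) N X) A
        = emeasure (density M (\<lambda>w. ennreal (Z w))) (X -` A \<inter> space M)"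
      by (simp add: emeasure_distr)
    also have "\<dots> = (\<integral>\<^sup>+ w. ennreal (Z w) * indicator (X -` A \<inter> space M) w \<partial>M)"
      by (rule emeasure_density) auto
    also have "\<dots> = (\<integral>\<^sup>+ w. ennreal (indicator A (X w) * Z w) \<partial>M)"
      by (rule nn_integral_cong) (auto simp: indicator_def)
    also have "\<dots> = ennreal (\<integral>\<omega>. indicator A (X \<omega>) * Z \<omega> \<partial>M)"
      by (rule nn_integral_eq_integral[OF i1]) (auto simp: Z0)
    also have "\<dots> = ennreal (\<integral>\<omega>. indicator A (X \<omega>) * p (X \<omega>) \<partial>M)"
      using pc[OF A] by simp
    also have "\<dots> = (\<integral>\<^sup>+ w. ennreal (indicator A (X w) * p (X w)) \<partial>M)"
      by (rule nn_integral_eq_integral[OF i2, symmetric]) (auto simp: p0)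
    also have "\<dots> = (\<integral>\<^sup>+ x. ennreal (p x) * indicator A x \<partial>distr M N X)"
      by (subst nn_integral_distr) (auto simp: indicator_def intro!: nn_integral_cong)
    also have "\<dots> = emeasure (density (distr M N X) (\<lambda>x. ennreal (p x))) A"
      by (rule emeasure_density[symmetric]) auto
    finally show "emeasure (distr (density M (\<lambda>w. ennreal (Z w))) N X) A = emeasure (density (distr M N X) (\<lambda>x. ennreal (p x))) A" .
  qed
  have "(\<integral>\<omega>. Z \<omega> * h (X \<omega>) \<partial>M) = integral\<^sup>L (density M (\<lambda>w. ennreal (Z w))) (\<lambda>w. h (X w))"
    by (subst integral_density) (auto simp: Z0)
  also have "\<dots> = integral\<^sup>L (distr (density M (\<lambda>w. ennreal (Z w))) N X) h"
    by (subst integral_distr) auto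
  also have "\<dots> = integral\<^sup>L (density (distr M N X) (\<lambda>x. ennreal (p x))) h"
    by (simp only: eq)
  also have "\<dots> = integral\<^sup>L (distr M N X) (\<lambda>x. p x * h x)"
    by (subst integral_density) (auto simp: p0)
  also have "\<dots> = (\<integral>\<omega>. p (X \<omega>) * h (X \<omega>) \<partial>M)"
    by (subst integral_distr) auto
  finally show ?thesis .
qed

theorem proposition1:
  fixes M :: "'w measure" and N :: "'x measure" and K :: "'y measure"
    and X :: "'w \<Rightarrow> 'x" and Y :: "'w \<Rightarrow> 'y" and C :: "'x \<Rightarrow> 'y set"
    and p :: "'x \<Rightarrow> real" and f f' :: "real \<Rightarrow> real" and \<alpha> :: real
  assumes "prob_space M"
    and X_meas: "X \<in> measurable M N" and Y_meas: "Y \<in> measurable M K"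
    and C_meas: "{(x, y). y \<in> C x} \<in> sets (N \<Otimes>\<^sub>M K)"
    and p_meas: "p \<in> borel_measurable N"
    and p_range: "\<And>x. p x \<in> {0..1}"
    and p_cond: "\<And>A. A \<in> sets N \<Longrightarrow>
        (\<integral>\<omega>. indicator A (X \<omega>) * indicator (C (X \<omega>)) (Y \<omega>) \<partial>M)
      = (\<integral>\<omega>. indicator A (X \<omega>) * p (X \<omega>) \<partial>M)"
    and alpha: "0 < \<alpha>" "\<alpha> < 1"
    and f_convex: "convex_on {0..1} f"
    and f_nonneg: "\<And>q. q \<in> {0..1} \<Longrightarrow> f q \<ge> 0"
    and f_zero: "f (1 - \<alpha>) = 0"
    and f'_sub: "subderivative_on f f' {0..1}"
    and f'_zero: "f' (1 - \<alpha>) = 0"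
    and integrable_risk: "integrable M (\<lambda>\<omega>. - f (p (X \<omega>))
          - (indicator (C (X \<omega>)) (Y \<omega>) - p (X \<omega>)) * f' (p (X \<omega>)))"
  shows "proper_score (\<lambda>q y. - f q - (y - q) * f' q)
    \<and> risk M X (\<lambda>\<omega>. indicator (C (X \<omega>)) (Y \<omega>)) (\<lambda>q y. - f q - (y - q) * f' q) (\<lambda>_. 1 - \<alpha>)
      - risk M X (\<lambda>\<omega>. indicator (C (X \<omega>)) (Y \<omega>)) (\<lambda>q y. - f q - (y - q) * f' q) p
      = (\<integral>\<omega>. f (p (X \<omega>)) \<partial>M)"
  proof -
  interpret prob_space M by fact
  define Z where "Z = (\<lambda>\<omega>. indicator (C (X \<omega>)) (Y \<omega>) :: real)"
  define S where "S = {(x, y). y \<in> C x}"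
  have XY[measurable]: "(\<lambda>\<omega>. (X \<omega>, Y \<omega>)) \<in> measurable M (N \<Otimes>\<^sub>M K)"
    using X_meas Y_meas by (rule measurable_Pair)
  have Sm: "S \<in> sets (N \<Otimes>\<^sub>M K)" using C_meas by (simp add: S_def)
  have "(\<lambda>\<omega>. indicator S (X \<omega>, Y \<omega>) :: real) \<in> borel_measurable M"
    using measurable_compose[OF XY borel_measurable_indicator[OF Sm]] by (simp add: o_def)
  moreover have "\<And>\<omega>. indicator S (X \<omega>, Y \<omega>) = Z \<omega>"
    by (simp add: S_def Z_def indicator_def)
  ultimately have Zm[measurable]: "Z \<in> borel_measurable M" by simp
  have Zr: "\<And>w. Z w \<in> {0..1}" by (simp add: Z_def indicator_def)
  have sub: "\<And>a b. a \<in> {0..1} \<Longrightarrow> b \<in> {0..1} \<Longrightarrow> f b \<ge> f a + f' a * (b - a)"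
    using f'_sub by (auto simp: subderivative_on_def)
  have f'mono: "f' a \<le> f' b" if "a \<in> {0..1}" "b \<in> {0..1}" "a \<le> b" for a b
  proof (cases "a = b")
    case False
    then have "a < b" using that by simp
    have "f b \<ge> f a + f' a * (b - a)" "f a \<ge> f b + f' b * (a - b)" using sub that by auto
    then have "(f' a - f' b) * (b - a) \<le> 0" by (simp add: algebra_simps)
    with \<open>a < b\<close> show ?thesis by (simp add: mult_le_0_iff)
  qed simp
  define g where "g t = f' (max 0 (min 1 t))" for t
  have "mono g" unfolding g_def mono_def by (auto intro!: f'mono)
  then have gm[measurable]: "g \<in> borel_measurable borel" by (rule borel_measurable_mono)
  have gp: "\<And>x. g (p x) = f' (p x)" using p_range by (simp add: g_def)
  have hm[measurable]: "(\<lambda>x. f' (p x)) \<in> borel_measurable N"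
    using measurable_compose[OF p_meas gm] gp by (simp add: o_def)
  have gb: "\<bar>f' t\<bar> \<le> \<bar>f' 0\<bar> + \<bar>f' 1\<bar>" if "t \<in> {0..1}" for t
    using f'mono[of 0 t] f'mono[of t 1] that by auto
  have pc: "\<And>A. A \<in> sets N \<Longrightarrow>
        (\<integral>\<omega>. indicator A (X \<omega>) * Z \<omega> \<partial>M) = (\<integral>\<omega>. indicator A (X \<omega>) * p (X \<omega>) \<partial>M)"
    using p_cond by (simp add: Z_def)
  have T: "(\<integral>\<omega>. Z \<omega> * f' (p (X \<omega>)) \<partial>M) = (\<integral>\<omega>. p (X \<omega>) * f' (p (X \<omega>)) \<partial>M)"
    by (rule transfer_lemma[OF \<open>prob_space M\<close> X_meas Zm Zr p_meas p_range pc hm])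
    have bZh: "\<bar>Z \<omega> * f' (p (X \<omega>))\<bar> \<le> \<bar>f' 0\<bar> + \<bar>f' 1\<bar>" for \<omega>
  proof -
    have "\<bar>Z \<omega>\<bar> \<le> 1" using Zr[of \<omega>] by auto
    then have "\<bar>Z \<omega>\<bar> * \<bar>f' (p (X \<omega>))\<bar> \<le> 1 * \<bar>f' (p (X \<omega>))\<bar>"
      by (intro mult_right_mono) auto
    then show ?thesis using gb[OF p_range, of "X \<omega>"] by (simp add: abs_mult)
  qed
  have bph: "\<bar>p (X \<omega>) * f' (p (X \<omega>))\<bar> \<le> \<bar>f' 0\<bar> + \<bar>f' 1\<bar>" for \<omega>
  proof -
    have "\<bar>p (X \<omega>)\<bar> \<le> 1" using p_range[of "X \<omega>"] by auto
    then have "\<bar>p (X \<omega>)\<bar> * \<bar>f' (p (X \<omega>))\<bar> \<le> 1 * \<bar>f' (p (X \<omega>))\<bar>"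
      by (intro mult_right_mono) auto
    then show ?thesis using gb[OF p_range, of "X \<omega>"] by (simp add: abs_mult)
  qed
  have hXm: "(\<lambda>\<omega>. f' (p (X \<omega>))) \<in> borel_measurable M"
    using measurable_compose[OF X_meas hm] by (simp add: o_def)
  have pXm: "(\<lambda>\<omega>. p (X \<omega>)) \<in> borel_measurable M"
    using measurable_compose[OF X_meas p_meas] by (simp add: o_def)
  have i1: "integrable M (\<lambda>\<omega>. Z \<omega> * f' (p (X \<omega>)))"
    by (rule integrable_const_bound[where B="\<bar>f' 0\<bar> + \<bar>f' 1\<bar>"]) (use bZh hXm Zm in auto)
  have i2: "integrable M (\<lambda>\<omega>. p (X \<omega>) * f' (p (X \<omega>)))"
    by (rule integrable_const_bound[where B="\<bar>f' 0\<bar> + \<bar>f' 1\<bar>"]) (use bph hXm pXm in auto)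
  have D0: "(\<integral>\<omega>. (Z \<omega> - p (X \<omega>)) * f' (p (X \<omega>)) \<partial>M) = 0"
    using T i1 i2 by (simp add: left_diff_distrib)
  have iD: "integrable M (\<lambda>\<omega>. (Z \<omega> - p (X \<omega>)) * f' (p (X \<omega>)))"
    using i1 i2 by (simp add: left_diff_distrib)
  define R where "R = (\<lambda>\<omega>. - f (p (X \<omega>)) - (Z \<omega> - p (X \<omega>)) * f' (p (X \<omega>)))"
  have iR: "integrable M R" using integrable_risk by (simp add: R_def Z_def)
  have fR: "(\<lambda>\<omega>. f (p (X \<omega>))) = (\<lambda>\<omega>. - R \<omega> - (Z \<omega> - p (X \<omega>)) * f' (p (X \<omega>)))"
    by (simp add: R_def)
  have "(\<integral>\<omega>. f (p (X \<omega>)) \<partial>M) = - (\<integral>\<omega>. R \<omega> \<partial>M) - (\<integral>\<omega>. (Z \<omega> - p (X \<omega>)) * f' (p (X \<omega>)) \<partial>M)"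
    unfolding fR using iR iD by simp
  then have fint: "(\<integral>\<omega>. f (p (X \<omega>)) \<partial>M) = - (\<integral>\<omega>. R \<omega> \<partial>M)" using D0 by simp
  have r1: "risk M X (\<lambda>\<omega>. indicator (C (X \<omega>)) (Y \<omega>)) (\<lambda>q y. - f q - (y - q) * f' q) (\<lambda>_. 1 - \<alpha>) = 0"
    by (simp add: risk_def f_zero f'_zero)
  have r2: "risk M X (\<lambda>\<omega>. indicator (C (X \<omega>)) (Y \<omega>)) (\<lambda>q y. - f q - (y - q) * f' q) p = (\<integral>\<omega>. R \<omega> \<partial>M)"
    by (simp add: risk_def R_def Z_def)
  have ps: "proper_score (\<lambda>q y. - f q - (y - q) * f' q)"
    unfolding proper_score_def
  proof (intro ballI)
    fix a q :: real assume a: "a \<in> {0..1}" and q: "q \<in> {0..1}"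
    have e1: "measure_pmf.expectation (bernoulli_pmf q) (\<lambda>b. - f a - (of_bool b - a) * f' a)
        = - f a - (q - a) * f' a" using q by (simp add: algebra_simps)
    have e2: "measure_pmf.expectation (bernoulli_pmf q) (\<lambda>b. - f q - (of_bool b - q) * f' q)
        = - f q" using q by (simp add: algebra_simps)
    show "measure_pmf.expectation (bernoulli_pmf q) (\<lambda>b. - f a - (of_bool b - a) * f' a)
        \<ge> measure_pmf.expectation (bernoulli_pmf q) (\<lambda>b. - f q - (of_bool b - q) * f' q)"
      unfolding e1 e2 using sub[OF a q] by (simp add: algebra_simps)
  qed
  show ?thesis
  proof (rule conjI)
    show "proper_score (\<lambda>q y. - f q - (y - q) * f' q)" by (rule ps)
  next
    show "risk M X (\<lambda>\<omega>. indicator (C (X \<omega>)) (Y \<omega>)) (\<lambda>q y. - f q - (y - q) * f' q) (\<lambda>_. 1 - \<alpha>)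
      - risk M X (\<lambda>\<omega>. indicator (C (X \<omega>)) (Y \<omega>)) (\<lambda>q y. - f q - (y - q) * f' q) p
      = (\<integral>\<omega>. f (p (X \<omega>)) \<partial>M)"
      unfolding r1 r2 fint by linarith
  qed
qed

end
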